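(* Let $f:\mathbb R^d\to[0,\infty)$ satisfy the hydrodynamic bounds, let $q>d+\gamma+2s$, $N>0$, $g(v)=N\min(1,|v|^{-q})$, and assume $f\le g$ on $\mathbb R^d$. Then for $|v|\ge2$, $$\mathcal B_{2,q}(f,f)(v)\lesssim \frac{|v|^\gamma}{q-(d+\gamma+2s)}\,g(v).$$
   Context: Fix $d\ge2$, $s\in(0,1)$, $\gamma\in\mathbb R$ with $\gamma+2s\in[0,2]$, and $\tilde b$ smooth with $0<\tilde b_0\le\tilde b\le\tilde b_1$. Hydrodynamic bounds: $m_0\le\int f\le M_0$, $\int f|v|^2\le E_0$, $\int f\ln f\le H_0$. $A\lesssim B$ means $A\le CB$ with $C$ depending only on $d,\gamma,s,\tilde b_0,\tilde b_1,m_0,M_0,E_0,H_0$. Let $c_1(q)=\frac1{20q}$ and $c_3(q)=\frac1{2(1+q)}$. For $v,v',v'_*$ with $(v'-v)\perp(v'_*-v)$ set $v_*=v'+v'_*-v$ and let $\theta$ be the angle between $v-v_*$ and $v'-v'_*$. Define $$\mathcal B_{2,q}(f_1,f_2)(v)=\int_{|v'|<c_3(q)|v|}\frac{f_2(v')-f_2(v)}{|v'-v|^{d+2s}}\int_{v'_*\in v+(v-v')^\perp,\ |v'_*|\ge c_1(q)|v|}f_1(v'_* )|v-v'_*|^{\gamma+2s+1}\tilde b(\cos\theta)\,dv'_*\,dv',$$ the inner integral over the affine hyperplane through $v$ orthogonal to $v-v'$ with $(d-1)$-dimensional Lebesgue measure. *)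

theory Defs
  imports "HOL-Analysis.Analysis"
begin

definition smooth_real :: "(real \<Rightarrow> real) \<Rightarrow> bool" where
  "smooth_real b \<longleftrightarrow> (\<forall>k x. ((deriv ^^ k) b) differentiable (at x))"

definition c1 :: "real \<Rightarrow> real" where "c1 q = 1 / (20 * q)"
definition c3 :: "real \<Rightarrow> real" where "c3 q = 1 / (2 * (1 + q))"

definition gweight :: "real \<Rightarrow> real \<Rightarrow> real^'n \<Rightarrow> real" where
  "gweight N q v = N * (if norm v \<le> 1 then 1 else norm v powr (- q))"

text \<open>(d-1)-dimensional Lebesgue measure on the affine hyperplane through p orthogonal to
  w (w nonzero): pushforward of the Lebesgue measure on the coordinate hyperplane
  {y. y i0 = 0} (product of Lebesgue measures over the other coordinates) under an
  affine isometry x \<mapsto> p + Q x, where Q is an orthogonal matrix sending the i0-th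
  unit vector to w/|w|.  By rotation/translation invariance this does not depend on the
  choices made.\<close>
definition hyp_index :: "'n::finite" where "hyp_index = (SOME i. True)"

definition hyp_rot :: "real^'n \<Rightarrow> real^'n^'n" where
  "hyp_rot w = (SOME Q. orthogonal_matrix Q \<and> Q *v axis hyp_index 1 = w /\<^sub>R norm w)"

definition hyperplane_measure :: "real^'n \<Rightarrow> real^'n \<Rightarrow> (real^'n) measure" where
  "hyperplane_measure p w =
     distr (Pi\<^sub>M (UNIV - {hyp_index}) (\<lambda>_. lborel)) borel
       (\<lambda>y. p + hyp_rot w *v (\<chi> j. if j = hyp_index then 0 else y j))"

definition cos_angle :: "real^'n \<Rightarrow> real^'n \<Rightarrow> real" where
  "cos_angle a b = (a \<bullet> b) / (norm a * norm b)"

definition B2q :: "real \<Rightarrow> real \<Rightarrow> real \<Rightarrow> (real \<Rightarrow> real) \<Rightarrow>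
    (real^'n \<Rightarrow> real) \<Rightarrow> (real^'n \<Rightarrow> real) \<Rightarrow> real^'n \<Rightarrow> real" where
  "B2q q \<gamma> s bt f1 f2 v =
     (\<integral>v'. indicator {v'. norm v' < c3 q * norm v} v' *
        ((f2 v' - f2 v) / norm (v' - v) powr (real CARD('n) + 2 * s) *
         (\<integral>vs'. indicator {x. norm x \<ge> c1 q * norm v} vs' * f1 vs' *
              norm (v - vs') powr (\<gamma> + 2 * s + 1) *
              bt (cos_angle (v - (v' + vs' - v)) (v' - vs'))
            \<partial>hyperplane_measure v (v - v')))
      \<partial>lborel)"

end

theory Submission
  imports Defs
begin


lemma tail_int:
  fixes c e :: real
  assumes c: "c > 0" and e: "e < -1"
  shows "(\<integral>\<^sup>+t. ennreal (t powr e) * indicator {c..} t \<partial>lborel) = ennreal (c powr (e+1) / (-(e+1)))"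
proof -
  have "(\<integral>\<^sup>+t. ennreal (t powr e) * indicator {c..} t \<partial>lborel) = ennreal (0 - c powr (e+1) / (e+1))"
  proof (rule nn_integral_FTC_atLeast)
    show "(\<lambda>t::real. t powr e) \<in> borel_measurable borel" by measurable
    show "((\<lambda>t. t powr (e+1) / (e+1)) has_real_derivative x powr e) (at x)" if "c \<le> x" for x
    proof -
      have "x > 0" using that c by linarith
      have "DERIV (\<lambda>t. t powr (e+1)) x :> (e+1) * x powr (e+1-1)"
        using \<open>x>0\<close> by (rule has_real_derivative_powr)
      then have "DERIV (\<lambda>t. t powr (e+1) / (e+1)) x :> (e+1) * x powr (e+1-1) / (e+1)"
        by (rule DERIV_cdivide)
      then show ?thesis using e by simp

    qed
    show "0 \<le> x powr e" for x by simp
    show "((\<lambda>t. t powr (e+1) / (e+1)) \<longlongrightarrow> 0) at_top"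
      using e by (auto intro!: tendsto_divide_zero tendsto_neg_powr filterlim_ident)
  qed
  then show ?thesis using e by (simp add: field_simps)
qed

lemma nn_reflect:
  fixes h :: "real \<Rightarrow> ennreal"
  assumes [measurable]: "h \<in> borel_measurable borel"
  shows "(\<integral>\<^sup>+t. h (-t) \<partial>lborel) = (\<integral>\<^sup>+t. h t \<partial>lborel)"
  using nn_integral_real_affine[OF assms, of "-1" 0] by simp

lemma sqrt_powr_eq: "0 < B \<Longrightarrow> sqrt B powr e = B powr (e/2)"
  by (simp add: powr_half_sqrt[symmetric] powr_powr)

lemma sq_powr_eq: "0 < (t::real) \<Longrightarrow> (t\<^sup>2) powr (e/2) = t powr e"
proof -
  assume "0 < t"
  then have "t\<^sup>2 = t powr 2" by (simp add: powr_numeral)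
  then have "(t\<^sup>2) powr (e/2) = (t powr 2) powr (e/2)" by (simp only:)
  also have "\<dots> = t powr (2*(e/2))" by (rule powr_powr)
  finally show ?thesis by simp
qed

lemma L1:
  fixes B r :: real
  assumes B: "B > 0" and r: "r > 1"
  shows "(\<integral>\<^sup>+t. ennreal ((B + t\<^sup>2) powr (-r/2)) \<partial>lborel) \<le> ennreal ((2 + 2/(r-1)) * B powr ((1-r)/2))"
proof -
  define c where "c = sqrt B"
  have c: "c > 0" using B by (simp add: c_def)
  define h where "h t = ennreal (t powr (-r)) * indicator {c..} t" for t
  have hm[measurable]: "h \<in> borel_measurable borel" unfolding h_def by measurable
  have pw: "ennreal ((B + t\<^sup>2) powr (-r/2)) \<le> ennreal (B powr (-r/2)) * indicator {-c..c} t + h t + h (-t)" for t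
  proof -
    have le: "ennreal ((B + t\<^sup>2) powr (-r/2)) \<le> ennreal (\<bar>t\<bar> powr (-r))" if "\<bar>t\<bar> \<ge> c"
    proof -
      have "\<bar>t\<bar> > 0" using that c by linarith
      have "(B + t\<^sup>2) powr (-r/2) \<le> (\<bar>t\<bar>\<^sup>2) powr (-r/2)"
        using r B \<open>\<bar>t\<bar> > 0\<close> by (intro powr_mono2') auto
      also have "\<dots> = \<bar>t\<bar> powr (-r)"
        using sq_powr_eq[OF \<open>\<bar>t\<bar> > 0\<close>, of "-r"] by simp
      finally show ?thesis by (rule ennreal_leI)
    qed
    show ?thesis
    proof (cases "\<bar>t\<bar> \<le> c")
      case True
      then have "(B + t\<^sup>2) powr (-r/2) \<le> B powr (-r/2)"
        using r B by (intro powr_mono2') auto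
      then have "ennreal ((B + t\<^sup>2) powr (-r/2)) \<le> ennreal (B powr (-r/2)) * indicator {-c..c} t"
        using True by (auto intro: ennreal_leI simp: indicator_def abs_le_iff)
      then show ?thesis by (meson add_increasing2 order_trans zero_le)
    next
      case False
      show ?thesis
      proof (cases "t \<ge> c")
        case True
        then have "ennreal ((B + t\<^sup>2) powr (-r/2)) \<le> h t"
          using le c by (auto simp: h_def)
        then show ?thesis by (metis add.commute add_increasing2 le_iff_add zero_le order_trans)
      next
        case F2: False
        then have "-t \<ge> c" using False by linarith
        then have "ennreal ((B + t\<^sup>2) powr (-r/2)) \<le> h (-t)"
          using le c by (auto simp: h_def)
        then show ?thesis by (metis add_increasing zero_le)
      qed
    qed
  qed
  have "(\<integral>\<^sup>+t. ennreal ((B + t\<^sup>2) powr (-r/2)) \<partial>lborel)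
      \<le> (\<integral>\<^sup>+t. ennreal (B powr (-r/2)) * indicator {-c..c} t + h t + h (-t) \<partial>lborel)"
    by (intro nn_integral_mono pw)
  also have "\<dots> = (\<integral>\<^sup>+t. ennreal (B powr (-r/2)) * indicator {-c..c} t \<partial>lborel) + (\<integral>\<^sup>+t. h t \<partial>lborel)
       + (\<integral>\<^sup>+t. h (-t) \<partial>lborel)"
    by (simp add: nn_integral_add)
  also have "(\<integral>\<^sup>+t. h (-t) \<partial>lborel) = (\<integral>\<^sup>+t. h t \<partial>lborel)"
    by (rule nn_reflect[OF hm])
  also have "(\<integral>\<^sup>+t. h t \<partial>lborel) = ennreal (c powr (-r+1) / (-(-r+1)))"
    unfolding h_def using tail_int[of c "-r"] c r by simp
  also have "(\<integral>\<^sup>+t. ennreal (B powr (-r/2)) * indicator {-c..c} t \<partial>lborel) = ennreal (B powr (-r/2) * (2*c))"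
    using c by (simp add: nn_integral_cmult_indicator ennreal_mult)
  also have "ennreal (B powr (-r/2) * (2*c)) + ennreal (c powr (-r+1) / (-(-r+1))) + ennreal (c powr (-r+1) / (-(-r+1)))
     = ennreal (B powr (-r/2) * (2*c) + c powr (-r+1) / (-(-r+1)) + c powr (-r+1) / (-(-r+1)))"
    using r c by (simp add: ennreal_plus[symmetric] del: ennreal_plus)
  also have "B powr (-r/2) * (2*c) + c powr (-r+1) / (-(-r+1)) + c powr (-r+1) / (-(-r+1))
      = (2 + 2/(r-1)) * B powr ((1-r)/2)"
  proof -
    have "c = B powr (1/2)" using B by (simp add: c_def powr_half_sqrt)
    then have "B powr (-r/2) * (2*c) = 2 * (B powr (-r/2) * B powr (1/2))" by simp
    also have "\<dots> = 2 * B powr ((1-r)/2)" by (simp add: powr_add[symmetric] diff_divide_distrib)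
    finally have e1: "B powr (-r/2) * (2*c) = 2 * B powr ((1-r)/2)" .
    have e2: "c powr (-r+1) = B powr ((1-r)/2)"
      using sqrt_powr_eq[OF B, of "-r+1"] by (simp add: c_def)
    have e3: "-(-r+1) = r - 1" by simp
    have gen: "2 * X + X / (r-1) + X / (r-1) = (2 + 2/(r-1)) * X" for X
      using r by (simp add: distrib_right)
    show ?thesis unfolding e1 e2 e3 by (rule gen)
  qed
  finally show ?thesis .
qed

lemma L2:
  fixes B r a :: real
  assumes B: "B > 0" and a: "a \<ge> 1" and r: "r > 1 + a"
  shows "(\<integral>\<^sup>+t. ennreal ((B + t\<^sup>2) powr (-r/2) * \<bar>t\<bar> powr a) \<partial>lborel)
     \<le> ennreal ((2/(r-2) + 2/(r-1-a)) * B powr ((1+a-r)/2))"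
proof -
  define c where "c = sqrt B"
  have c: "c > 0" using B by (simp add: c_def)
  define K where "K = B powr ((a-1)/2)"
  have K: "K > 0" using B by (simp add: K_def)
  define h where "h t = ennreal (t powr (a-r)) * indicator {c..} t" for t
  have hm[measurable]: "h \<in> borel_measurable borel" unfolding h_def by measurable
  define \<psi> where "\<psi> t = ennreal (K * ((B + t\<^sup>2) powr (-r/2) * t)) * indicator {0..c} t" for t
  have \<psi>m[measurable]: "\<psi> \<in> borel_measurable borel" unfolding \<psi>_def by measurable
  have pw0: "ennreal ((B + u\<^sup>2) powr (-r/2) * u powr a) \<le> \<psi> u + h u" if u: "u \<ge> 0" for u
  proof (cases "u \<le> c")
    case True
    have "u powr a \<le> K * u"
    proof (cases "u = 0")
      case False
      then have "u > 0" using u by simp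
      have "u powr a = u powr (a-1) * u" using \<open>u>0\<close> by (simp add: powr_diff)
      also have "u powr (a-1) \<le> c powr (a-1)" using True \<open>u>0\<close> a by (intro powr_mono2) auto
      also have "c powr (a-1) = K" unfolding K_def c_def using sqrt_powr_eq[OF B, of "a-1"] by simp
      finally show ?thesis using \<open>u>0\<close> by simp
    qed (use a in simp)
    then have "(B + u\<^sup>2) powr (-r/2) * u powr a \<le> (B + u\<^sup>2) powr (-r/2) * (K * u)"
      by (intro mult_left_mono) auto
    then have "ennreal ((B + u\<^sup>2) powr (-r/2) * u powr a) \<le> \<psi> u"
      using True u by (auto simp: \<psi>_def intro!: ennreal_leI simp: algebra_simps)
    then show ?thesis by (meson add_increasing2 order_trans zero_le)
  next
    case False
    then have "u > 0" using c by linarith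
    have "(B + u\<^sup>2) powr (-r/2) \<le> (u\<^sup>2) powr (-r/2)"
      using r a B \<open>u > 0\<close> by (intro powr_mono2') auto
    also have "\<dots> = u powr (-r)"
      using sq_powr_eq[OF \<open>u > 0\<close>, of "-r"] by simp
    finally have "(B + u\<^sup>2) powr (-r/2) * u powr a \<le> u powr (-r) * u powr a"
      by (intro mult_right_mono) auto
    also have "\<dots> = u powr (a - r)" by (simp add: powr_add[symmetric])
    finally have "ennreal ((B + u\<^sup>2) powr (-r/2) * u powr a) \<le> h u"
      using False by (auto simp: h_def intro!: ennreal_leI)
    then show ?thesis by (metis add.commute add_increasing2 le_iff_add zero_le order_trans)
  qed
  have pw: "ennreal ((B + t\<^sup>2) powr (-r/2) * \<bar>t\<bar> powr a) \<le> \<psi> t + h t + (\<psi> (-t) + h (-t))" for t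
  proof (cases "t \<ge> 0")
    case True
    then have "ennreal ((B + t\<^sup>2) powr (-r/2) * \<bar>t\<bar> powr a) \<le> \<psi> t + h t" using pw0[of t] by simp
    then show ?thesis by (meson add_increasing2 order_trans zero_le)
  next
    case False
    then have "ennreal ((B + t\<^sup>2) powr (-r/2) * \<bar>t\<bar> powr a) \<le> \<psi> (-t) + h (-t)" using pw0[of "-t"] by simp
    then show ?thesis by (metis add_increasing zero_le)
  qed
  have h_eq: "(\<integral>\<^sup>+t. h t \<partial>lborel) = ennreal (c powr (a-r+1) / (-(a-r+1)))"
    unfolding h_def using tail_int[of c "a-r"] c r by simp
  have psi_le: "(\<integral>\<^sup>+t. \<psi> t \<partial>lborel) \<le> ennreal (K * (B powr (1 - r/2) / (r-2)))"
  proof -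
    define F where "F x = K * ((B + x\<^sup>2) powr (1 - r/2) / (2 - r))" for x
    have "(\<integral>\<^sup>+t. \<psi> t \<partial>lborel) = F c - F 0"
      unfolding \<psi>_def
    proof (rule nn_integral_FTC_Icc)
      show "(\<lambda>t. K * ((B + t\<^sup>2) powr (-r/2) * t)) \<in> borel_measurable borel" by measurable
      show "0 \<le> c" using c by simp
      show "0 \<le> K * ((B + x\<^sup>2) powr (-r/2) * x)" if "x \<in> {0..c}" for x
        using that K by auto
      show "DERIV F x :> K * ((B + x\<^sup>2) powr (-r/2) * x)" if "x \<in> {0..c}" for x
      proof -
        have d: "DERIV (\<lambda>x. B + x\<^sup>2) x :> 2 * x"
          by (auto intro!: derivative_eq_intros)
        have "DERIV (\<lambda>x. (B + x\<^sup>2) powr (1 - r/2)) x :> (1 - r/2) * (B + x\<^sup>2) powr ((1 - r/2) - of_nat 1) * (2*x)"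
          using B by (intro DERIV_fun_powr[OF d]) (simp add: add_pos_nonneg)
        then have "DERIV (\<lambda>x. K * ((B + x\<^sup>2) powr (1 - r/2) / (2 - r))) x :> K * ((1 - r/2) * (B + x\<^sup>2) powr ((1 - r/2) - of_nat 1) * (2*x) / (2 - r))"
          by (intro DERIV_cmult DERIV_cdivide)
        moreover have "K * ((1 - r/2) * (B + x\<^sup>2) powr ((1 - r/2) - of_nat 1) * (2*x) / (2 - r)) = K * ((B + x\<^sup>2) powr (-r/2) * x)"
          using r a by (simp add: field_simps)
        ultimately show ?thesis unfolding F_def by simp
      qed
    qed
    also have "F c - F 0 \<le> K * (B powr (1 - r/2) / (r-2))"
    proof -
      have "c\<^sup>2 = B" using B by (simp add: c_def)
      then have "F c - F 0 = K * (B powr (1 - r/2) - (B + B) powr (1 - r/2)) / (r - 2)"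
      proof -
        have gen: "K * (X / (2-r)) - K * (Y / (2-r)) = K * (Y - X) / (r-2)" for X Y
        proof -
          have nz: "r - 2 \<noteq> 0" "2 - r \<noteq> 0" using r a by auto
          have e: "(X - Y)/(2-r) = (Y-X)/(r-2)" by (metis minus_diff_eq minus_divide_divide)
          have "K * (X / (2-r)) - K * (Y / (2-r)) = K * ((X - Y)/(2-r))"
            by (simp add: diff_divide_distrib right_diff_distrib)
          then show ?thesis using e by simp
        qed
        show ?thesis unfolding F_def \<open>c\<^sup>2 = B\<close> using gen by simp
      qed
      also have "\<dots> \<le> K * (B powr (1 - r/2)) / (r - 2)"
        using r a K by (intro divide_right_mono mult_left_mono) auto
      finally show ?thesis by simp
    qed
    finally show ?thesis by (simp add: ennreal_leI)
  qed
  have "(\<integral>\<^sup>+t. ennreal ((B + t\<^sup>2) powr (-r/2) * \<bar>t\<bar> powr a) \<partial>lborel)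
      \<le> (\<integral>\<^sup>+t. \<psi> t + h t + (\<psi> (-t) + h (-t)) \<partial>lborel)"
    by (intro nn_integral_mono pw)
  also have "\<dots> = (\<integral>\<^sup>+t. \<psi> t \<partial>lborel) + (\<integral>\<^sup>+t. h t \<partial>lborel) + ((\<integral>\<^sup>+t. \<psi> (-t) \<partial>lborel) + (\<integral>\<^sup>+t. h (-t) \<partial>lborel))"
    by (simp add: nn_integral_add)
  also have "(\<integral>\<^sup>+t. h (-t) \<partial>lborel) = (\<integral>\<^sup>+t. h t \<partial>lborel)"
    by (rule nn_reflect[OF hm])
  also have "(\<integral>\<^sup>+t. \<psi> (-t) \<partial>lborel) = (\<integral>\<^sup>+t. \<psi> t \<partial>lborel)"
    by (rule nn_reflect[OF \<psi>m])
  finally have "(\<integral>\<^sup>+t. ennreal ((B + t\<^sup>2) powr (-r/2) * \<bar>t\<bar> powr a) \<partial>lborel)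
     \<le> (\<integral>\<^sup>+t. \<psi> t \<partial>lborel) + (\<integral>\<^sup>+t. h t \<partial>lborel) + ((\<integral>\<^sup>+t. \<psi> t \<partial>lborel) + (\<integral>\<^sup>+t. h t \<partial>lborel))" .
  also have "\<dots> \<le> ennreal (K * (B powr (1 - r/2) / (r-2))) + ennreal (c powr (a-r+1) / (-(a-r+1))) +
        (ennreal (K * (B powr (1 - r/2) / (r-2))) + ennreal (c powr (a-r+1) / (-(a-r+1))))"
    unfolding h_eq by (intro add_mono psi_le order_refl)
  also have "\<dots> = ennreal (K * (B powr (1 - r/2) / (r-2)) + c powr (a-r+1) / (-(a-r+1)) +
        (K * (B powr (1 - r/2) / (r-2)) + c powr (a-r+1) / (-(a-r+1))))"
    using r a c K by (simp add: ennreal_plus[symmetric] del: ennreal_plus)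
  also have "K * (B powr (1 - r/2) / (r-2)) + c powr (a-r+1) / (-(a-r+1)) +
        (K * (B powr (1 - r/2) / (r-2)) + c powr (a-r+1) / (-(a-r+1)))
      = (2/(r-2) + 2/(r-1-a)) * B powr ((1+a-r)/2)"
  proof -
    have e1: "K * B powr (1 - r/2) = B powr ((1+a-r)/2)"
      unfolding K_def by (simp add: powr_add[symmetric] add_divide_distrib diff_divide_distrib add_diff_eq)
    have e2: "c powr (a-r+1) = B powr ((1+a-r)/2)"
      using sqrt_powr_eq[OF B, of "a-r+1"] by (simp add: c_def add.commute add_diff_eq)
    have e3: "-(a-r+1) = r-1-a" by simp
    have gen: "X / (r-2) + X / (r-1-a) + (X/(r-2) + X/(r-1-a)) = (2/(r-2) + 2/(r-1-a)) * X" for X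
      by (simp add: distrib_right)
    have e1': "K * (B powr (1-r/2)/(r-2)) = B powr((1+a-r)/2)/(r-2)" using e1 by simp
    show ?thesis unfolding e2 e3 e1' by (rule gen)
  qed
  finally show ?thesis .
qed

fun Dc :: "nat \<Rightarrow> real \<Rightarrow> real" where
  "Dc 0 r = 1"
| "Dc (Suc n) r = (2 + 2/(r-1)) * Dc n (r-1)"

lemma Dc_nonneg: "r > real n \<Longrightarrow> Dc n r \<ge> 0"
proof (induction n arbitrary: r)
  case (Suc n)
  then have "r - 1 > real n" by simp
  then show ?case using Suc by (simp add: add_pos_nonneg)
qed simp

lemma sum_upd_sq:
  assumes "finite I" "i \<notin> I"
  shows "(\<Sum>j\<in>insert i I. ((x(i := t)) j)\<^sup>2) = t\<^sup>2 + (\<Sum>j\<in>I. (x j)\<^sup>2)"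
proof -
  have "(\<Sum>j\<in>I. ((x(i := t)) j)\<^sup>2) = (\<Sum>j\<in>I. (x j)\<^sup>2)"
    using assms by (intro sum.cong) auto
  then show ?thesis using assms by simp
qed

lemma P_bound:
  fixes I :: "'a set"
  assumes "finite I"
  shows "B > 0 \<Longrightarrow> r > real (card I) \<Longrightarrow>
    (\<integral>\<^sup>+y. ennreal ((B + (\<Sum>i\<in>I. (y i)\<^sup>2)) powr (-r/2)) \<partial>Pi\<^sub>M I (\<lambda>_. lborel))
      \<le> ennreal (Dc (card I) r * B powr ((real (card I) - r)/2))"
  using assms
proof (induction I arbitrary: B r rule: finite_induct)
  case empty
  then show ?case by (simp add: PiM_empty nn_integral_count_space_finite)
next
  case (insert i I)
  interpret product_sigma_finite "\<lambda>_::'a. lborel :: real measure" by standard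
  have B: "B > 0" and r: "r > real (card I) + 1" using insert by auto
  have "(\<integral>\<^sup>+y. ennreal ((B + (\<Sum>j\<in>insert i I. (y j)\<^sup>2)) powr (-r/2)) \<partial>Pi\<^sub>M (insert i I) (\<lambda>_. lborel))
     = (\<integral>\<^sup>+x. (\<integral>\<^sup>+t. ennreal ((B + (\<Sum>j\<in>insert i I. ((x(i:=t)) j)\<^sup>2)) powr (-r/2)) \<partial>lborel) \<partial>Pi\<^sub>M I (\<lambda>_. lborel))"
    using insert by (intro product_nn_integral_insert) (auto intro!: measurable_PiM_single')
  also have "\<dots> = (\<integral>\<^sup>+x. (\<integral>\<^sup>+t. ennreal (((B + (\<Sum>j\<in>I. (x j)\<^sup>2)) + t\<^sup>2) powr (-r/2)) \<partial>lborel) \<partial>Pi\<^sub>M I (\<lambda>_. lborel))"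
    by (simp only: sum_upd_sq[OF insert.hyps(1,2)]) (simp add: add_ac)
  also have "\<dots> \<le> (\<integral>\<^sup>+x. ennreal ((2 + 2/(r-1)) * (B + (\<Sum>j\<in>I. (x j)\<^sup>2)) powr ((1-r)/2)) \<partial>Pi\<^sub>M I (\<lambda>_. lborel))"
  proof (intro nn_integral_mono L1)
    fix x :: "'a \<Rightarrow> real"
    show "0 < B + (\<Sum>j\<in>I. (x j)\<^sup>2)" using B by (intro add_pos_nonneg sum_nonneg) auto
    show "1 < r" using r by simp
  qed
  also have "\<dots> = ennreal (2 + 2/(r-1)) * (\<integral>\<^sup>+x. ennreal ((B + (\<Sum>j\<in>I. (x j)\<^sup>2)) powr (-(r-1)/2)) \<partial>Pi\<^sub>M I (\<lambda>_. lborel))"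
    using r by (subst nn_integral_cmult[symmetric]) (auto simp: ennreal_mult add_pos_nonneg minus_divide_left)
  also have "\<dots> \<le> ennreal (2 + 2/(r-1)) * ennreal (Dc (card I) (r-1) * B powr ((real (card I) - (r-1))/2))"
    using r B by (intro mult_left_mono insert.IH) auto
  also have "\<dots> = ennreal (Dc (card (insert i I)) r * B powr ((real (card (insert i I)) - r)/2))"
  proof -
    have d: "Dc (card I) (r-1) \<ge> 0" using r by (intro Dc_nonneg) simp
    have x: "2 + 2/(r-1) \<ge> 0" using r by (simp add: add_nonneg_nonneg)
    have "ennreal (2 + 2/(r-1)) * ennreal (Dc (card I) (r-1) * B powr ((real (card I) - (r-1))/2))
       = ennreal ((2 + 2/(r-1)) * (Dc (card I) (r-1) * B powr ((real (card I) - (r-1))/2)))"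
      using d x by (simp add: ennreal_mult)
    also have "(2 + 2/(r-1)) * (Dc (card I) (r-1) * B powr ((real (card I) - (r-1))/2))
      = Dc (card (insert i I)) r * B powr ((real (card (insert i I)) - r)/2)"
      using insert by (simp add: algebra_simps)
    finally show ?thesis .
  qed
  finally show ?case .
qed

lemma Pa_bound:
  fixes I :: "'a set"
  assumes I: "finite I" "i \<in> I" and B: "B > 0" and a: "a \<ge> 1" and q: "q > real (card I) + a"
  shows "(\<integral>\<^sup>+y. ennreal ((B + (\<Sum>j\<in>I. (y j)\<^sup>2)) powr (-q/2) * \<bar>y i\<bar> powr a) \<partial>Pi\<^sub>M I (\<lambda>_. lborel))
      \<le> ennreal ((2/(q-2) + 2/(q-1-a)) * Dc (card I - 1) (q-1-a) * B powr ((real (card I) + a - q)/2))"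
proof -
  interpret product_sigma_finite "\<lambda>_::'a. lborel :: real measure" by standard
  define J where "J = I - {i}"
  have IJ: "I = insert i J" "finite J" "i \<notin> J" using I by (auto simp: J_def)
  have cJ: "card I = Suc (card J)" using IJ by simp
  have q1: "q > 1 + a" using q cJ by simp
  have "(\<integral>\<^sup>+y. ennreal ((B + (\<Sum>j\<in>I. (y j)\<^sup>2)) powr (-q/2) * \<bar>y i\<bar> powr a) \<partial>Pi\<^sub>M I (\<lambda>_. lborel))
     = (\<integral>\<^sup>+x. (\<integral>\<^sup>+t. ennreal ((B + (\<Sum>j\<in>insert i J. ((x(i:=t)) j)\<^sup>2)) powr (-q/2) * \<bar>(x(i:=t)) i\<bar> powr a) \<partial>lborel) \<partial>Pi\<^sub>M J (\<lambda>_. lborel))"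
    unfolding IJ(1) using IJ by (intro product_nn_integral_insert) (auto intro!: measurable_PiM_single')
  also have "\<dots> = (\<integral>\<^sup>+x. (\<integral>\<^sup>+t. ennreal (((B + (\<Sum>j\<in>J. (x j)\<^sup>2)) + t\<^sup>2) powr (-q/2) * \<bar>t\<bar> powr a) \<partial>lborel) \<partial>Pi\<^sub>M J (\<lambda>_. lborel))"
    by (simp only: sum_upd_sq[OF IJ(2,3)] fun_upd_same) (simp add: add_ac)
  also have "\<dots> \<le> (\<integral>\<^sup>+x. ennreal ((2/(q-2) + 2/(q-1-a)) * (B + (\<Sum>j\<in>J. (x j)\<^sup>2)) powr ((1+a-q)/2)) \<partial>Pi\<^sub>M J (\<lambda>_. lborel))"
  proof (intro nn_integral_mono L2)
    fix x :: "'a \<Rightarrow> real"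
    show "0 < B + (\<Sum>j\<in>J. (x j)\<^sup>2)" using B by (intro add_pos_nonneg sum_nonneg) auto
  qed (use a q1 in auto)
  also have "\<dots> = (\<integral>\<^sup>+x. ennreal (2/(q-2) + 2/(q-1-a)) * ennreal ((B + (\<Sum>j\<in>J. (x j)\<^sup>2)) powr (-(q-1-a)/2)) \<partial>Pi\<^sub>M J (\<lambda>_. lborel))"
  proof (intro nn_integral_cong)
    fix x :: "'a \<Rightarrow> real"
    have ex: "(1+a-q)/2 = -(q-1-a)/2" by simp
    have kp: "2/(q-2) + 2/(q-1-a) \<ge> 0" using q1 a by (simp add: add_nonneg_nonneg)
    show "ennreal ((2/(q-2) + 2/(q-1-a)) * (B + (\<Sum>j\<in>J. (x j)\<^sup>2)) powr ((1+a-q)/2)) =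
        ennreal (2/(q-2) + 2/(q-1-a)) * ennreal ((B + (\<Sum>j\<in>J. (x j)\<^sup>2)) powr (-(q-1-a)/2))"
      unfolding ex using kp by (simp add: ennreal_mult)
  qed
  also have "\<dots> = ennreal (2/(q-2) + 2/(q-1-a)) * (\<integral>\<^sup>+x. ennreal ((B + (\<Sum>j\<in>J. (x j)\<^sup>2)) powr (-(q-1-a)/2)) \<partial>Pi\<^sub>M J (\<lambda>_. lborel))"
    using IJ by (intro nn_integral_cmult) (auto intro!: measurable_PiM_single')
  also have "\<dots> \<le> ennreal (2/(q-2) + 2/(q-1-a)) * ennreal (Dc (card J) (q-1-a) * B powr ((real (card J) - (q-1-a))/2))"
    using q cJ B by (intro mult_left_mono P_bound IJ) auto
  also have "\<dots> = ennreal ((2/(q-2) + 2/(q-1-a)) * Dc (card I - 1) (q-1-a) * B powr ((real (card I) + a - q)/2))"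
  proof -
    have d: "Dc (card J) (q-1-a) \<ge> 0" using q cJ by (intro Dc_nonneg) simp
    have x: "2/(q-2) + 2/(q-1-a) \<ge> 0" using q1 a by (simp add: add_nonneg_nonneg)
    show ?thesis using d x cJ by (simp add: ennreal_mult[symmetric] algebra_simps)
  qed
  finally show ?thesis .
qed

lemma Dc_le: "r > real n \<Longrightarrow> Dc n r \<le> 4^n * (1 + 1/(r - n))"
proof (induction n arbitrary: r)
  case 0
  then show ?case by simp
next
  case (Suc n)
  have r1: "r - 1 > real n" using Suc by simp
  have IH: "Dc n (r-1) \<le> 4^n * (1 + 1/(r - 1 - n))" using Suc.IH[OF r1] by simp
  have d0: "Dc n (r-1) \<ge> 0" using r1 by (rule Dc_nonneg)
  show ?case
  proof (cases n)
    case 0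
    then show ?thesis using Suc by (simp add: field_simps)
  next
    case (Suc m)
    then have "r \<ge> 2" using r1 by simp
    then have "2 + 2/(r-1) \<le> 4" by (simp add: field_simps)
    then have "(2 + 2/(r-1)) * Dc n (r-1) \<le> 4 * (4^n * (1 + 1/(r - 1 - n)))"
      using IH d0 by (intro mult_mono) auto
    then show ?thesis by (simp add: algebra_simps)
  qed
qed

lemma kD_bound:
  fixes n :: nat and q a :: real
  assumes n: "n \<ge> 1" and a: "a \<ge> 1" and q: "q > real n + a"
  shows "(2/(q-2) + 2/(q-1-a)) * Dc (n - 1) (q-1-a) \<le> 8 * 4^n / (q - n - a)"
proof -
  define \<epsilon> where "\<epsilon> = q - n - a"
  have e: "\<epsilon> > 0" using q by (simp add: \<epsilon>_def)
  have k: "2/(q-2) + 2/(q-1-a) \<le> 4/(q-1-a)"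
  proof -
    have "q - 1 - a > 0" using q n by simp
    moreover have "q - 2 \<ge> q - 1 - a" using a by simp
    ultimately have "2/(q-2) \<le> 2/(q-1-a)" by (intro divide_left_mono) auto
    then show ?thesis by simp
  qed
  have kpos: "0 \<le> 2/(q-2) + 2/(q-1-a)" using q n a by (simp add: add_nonneg_nonneg)
  show ?thesis
  proof (cases "n = 1")
    case True
    then have "(2/(q-2) + 2/(q-1-a)) * Dc (n - 1) (q-1-a) \<le> 4/(q-1-a)" using k by simp
    also have "\<dots> = 4 / \<epsilon>" using True by (simp add: \<epsilon>_def)
    also have "\<dots> \<le> 8 * 4^n / \<epsilon>" using e True by (simp add: divide_right_mono)
    finally show ?thesis by (simp add: \<epsilon>_def)
  next
    case False
    then have n2: "n \<ge> 2" using n by simp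
    have r: "q - 1 - a > real (n - 1)" using q n by (simp add: of_nat_diff)
    have D: "Dc (n-1) (q-1-a) \<le> 4^(n-1) * (1 + 1/\<epsilon>)"
      using Dc_le[OF r] n by (simp add: \<epsilon>_def of_nat_diff algebra_simps)
    have D0: "Dc (n-1) (q-1-a) \<ge> 0" using r by (rule Dc_nonneg)
    have "(2/(q-2) + 2/(q-1-a)) * Dc (n - 1) (q-1-a) \<le> 4/(q-1-a) * (4^(n-1) * (1 + 1/\<epsilon>))"
      using k D kpos D0 q n by (intro mult_mono) auto
    also have "4/(q-1-a) * (4^(n-1) * (1 + 1/\<epsilon>)) = 4^n / \<epsilon> * ((\<epsilon> + 1) / (\<epsilon> + (real n - 1)))"
    proof -
      have qe: "q - 1 - a = \<epsilon> + (real n - 1)" by (simp add: \<epsilon>_def)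
      have "4 * 4^(n-1) = (4::real)^n" using n by (simp add: power_eq_if[of _ n])
      then show ?thesis unfolding qe using e n2 by (simp add: field_simps)
    qed
    also have "\<dots> \<le> 4^n / \<epsilon> * 1"
      using e n2 by (intro mult_left_mono) auto
    also have "\<dots> \<le> 8 * 4^n / \<epsilon>" using e by (simp add: divide_right_mono)
    finally show ?thesis unfolding \<epsilon>_def .
  qed
qed

lemma sum_powr_le:
  fixes y :: "'a \<Rightarrow> real"
  assumes I: "finite I" "I \<noteq> {}" and a: "a > 0"
  shows "(\<Sum>j\<in>I. (y j)\<^sup>2) powr (a/2) \<le> real (card I) powr (a/2) * (\<Sum>i\<in>I. \<bar>y i\<bar> powr a)"
proof -
  have "Max ((\<lambda>j. (y j)\<^sup>2) ` I) \<in> (\<lambda>j. (y j)\<^sup>2) ` I" using I by (intro Max_in) auto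
  then obtain i where i1: "i \<in> I" and Mi: "Max ((\<lambda>j. (y j)\<^sup>2) ` I) = (y i)\<^sup>2" by auto
  have i2: "(y j)\<^sup>2 \<le> (y i)\<^sup>2" if "j \<in> I" for j
    unfolding Mi[symmetric] using I that by (intro Max_ge) auto
  note i = i1 i2
  have "(\<Sum>j\<in>I. (y j)\<^sup>2) \<le> (\<Sum>j\<in>I. (y i)\<^sup>2)" using i by (intro sum_mono) auto
  also have "\<dots> = real (card I) * (y i)\<^sup>2" by simp
  finally have "(\<Sum>j\<in>I. (y j)\<^sup>2) powr (a/2) \<le> (real (card I) * (y i)\<^sup>2) powr (a/2)"
    using a by (intro powr_mono2) (auto intro: sum_nonneg)
  also have "\<dots> = real (card I) powr (a/2) * ((y i)\<^sup>2) powr (a/2)"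
    by (simp add: powr_mult)
  also have "((y i)\<^sup>2) powr (a/2) = \<bar>y i\<bar> powr a"
  proof (cases "y i = 0")
    case True then show ?thesis using a by simp
  next
    case False
    then have "\<bar>y i\<bar> > 0" by simp
    from sq_powr_eq[OF this, of a] show ?thesis by simp
  qed
  also have "\<bar>y i\<bar> powr a \<le> (\<Sum>i\<in>I. \<bar>y i\<bar> powr a)"
    using i I by (intro member_le_sum) auto
  finally show ?thesis by (simp add: mult_left_mono)
qed

lemma Full_bound:
  fixes I :: "'a set"
  assumes I: "finite I" "I \<noteq> {}" and B: "B > 0" and a: "a \<ge> 1" and q: "q > real (card I) + a"
  shows "(\<integral>\<^sup>+y. ennreal ((B + (\<Sum>j\<in>I. (y j)\<^sup>2)) powr (-q/2) * (\<Sum>j\<in>I. (y j)\<^sup>2) powr (a/2)) \<partial>Pi\<^sub>M I (\<lambda>_. lborel))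
      \<le> ennreal (real (card I) powr (a/2) * real (card I) * (8 * 4^card I / (q - card I - a)) * B powr ((real (card I) + a - q)/2))"
proof -
  define n where "n = card I"
  have n1: "n \<ge> 1" using I by (simp add: n_def Suc_le_eq card_gt_0_iff)
  define E where "E = 8 * 4^n / (q - n - a) * B powr ((real n + a - q)/2)"
  have E0: "E \<ge> 0" using q by (simp add: E_def n_def)
  define S where "S y = (\<Sum>j\<in>I. (y j)\<^sup>2)" for y :: "'a \<Rightarrow> real"
  have Sm[measurable]: "S \<in> borel_measurable (Pi\<^sub>M I (\<lambda>_. lborel))"
    unfolding S_def using I by (auto intro!: measurable_PiM_single')
  have "(\<integral>\<^sup>+y. ennreal ((B + S y) powr (-q/2) * S y powr (a/2)) \<partial>Pi\<^sub>M I (\<lambda>_. lborel))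
     \<le> (\<integral>\<^sup>+y. (\<Sum>i\<in>I. ennreal (n powr (a/2)) * ennreal ((B + S y) powr (-q/2) * \<bar>y i\<bar> powr a)) \<partial>Pi\<^sub>M I (\<lambda>_. lborel))"
  proof (intro nn_integral_mono)
    fix y :: "'a \<Rightarrow> real"
    have "(B + S y) powr (-q/2) * S y powr (a/2) \<le> (B + S y) powr (-q/2) * (n powr (a/2) * (\<Sum>i\<in>I. \<bar>y i\<bar> powr a))"
      using sum_powr_le[OF I, of a y] a by (intro mult_left_mono) (auto simp: S_def n_def)
    also have "\<dots> = (\<Sum>i\<in>I. n powr (a/2) * ((B + S y) powr (-q/2) * \<bar>y i\<bar> powr a))"
      by (simp add: sum_distrib_left sum_distrib_right mult_ac)
    finally have "ennreal ((B + S y) powr (-q/2) * S y powr (a/2)) \<le> ennreal (\<Sum>i\<in>I. n powr (a/2) * ((B + S y) powr (-q/2) * \<bar>y i\<bar> powr a))"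
      by (rule ennreal_leI)
    also have "\<dots> = (\<Sum>i\<in>I. ennreal (n powr (a/2)) * ennreal ((B + S y) powr (-q/2) * \<bar>y i\<bar> powr a))"
      by (subst sum_ennreal[symmetric]) (auto simp: ennreal_mult)
    finally show "ennreal ((B + S y) powr (-q/2) * S y powr (a/2)) \<le> (\<Sum>i\<in>I. ennreal (n powr (a/2)) * ennreal ((B + S y) powr (-q/2) * \<bar>y i\<bar> powr a))" .
  qed
  also have "\<dots> = (\<Sum>i\<in>I. ennreal (n powr (a/2)) * (\<integral>\<^sup>+y. ennreal ((B + S y) powr (-q/2) * \<bar>y i\<bar> powr a) \<partial>Pi\<^sub>M I (\<lambda>_. lborel)))"
    using I by (subst nn_integral_sum) (auto intro!: sum.cong nn_integral_cmult)
  also have "\<dots> \<le> (\<Sum>i\<in>I. ennreal (n powr (a/2)) * ennreal E)"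
  proof (intro sum_mono mult_left_mono)
    fix i assume i: "i \<in> I"
    have "(\<integral>\<^sup>+y. ennreal ((B + S y) powr (-q/2) * \<bar>y i\<bar> powr a) \<partial>Pi\<^sub>M I (\<lambda>_. lborel))
      \<le> ennreal ((2/(q-2) + 2/(q-1-a)) * Dc (card I - 1) (q-1-a) * B powr ((real (card I) + a - q)/2))"
      unfolding S_def by (rule Pa_bound[OF I(1) i B a q])
    also have "\<dots> \<le> ennreal E"
      unfolding E_def n_def using B
      by (intro ennreal_leI mult_right_mono kD_bound) (use n1 a q in \<open>auto simp: n_def\<close>)
    finally show "(\<integral>\<^sup>+y. ennreal ((B + S y) powr (-q/2) * \<bar>y i\<bar> powr a) \<partial>Pi\<^sub>M I (\<lambda>_. lborel)) \<le> ennreal E" .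
  qed simp
  also have "\<dots> = ennreal (real (card I) powr (a/2) * real (card I) * (8 * 4^card I / (q - card I - a)) * B powr ((real (card I) + a - q)/2))"
  proof -
    have "(\<Sum>i\<in>I. ennreal (n powr (a/2)) * ennreal E) = (\<Sum>i\<in>I. ennreal (n powr (a/2) * E))"
      using E0 by (simp add: ennreal_mult)
    also have "\<dots> = ennreal (\<Sum>i\<in>I. n powr (a/2) * E)"
      using E0 by (intro sum_ennreal) simp
    also have "(\<Sum>i\<in>I. n powr (a/2) * E) = real (card I) powr (a/2) * real (card I) * (8 * 4^card I / (q - card I - a)) * B powr ((real (card I) + a - q)/2)"
      by (simp add: E_def n_def)
    finally show ?thesis .
  qed
  finally show ?thesis unfolding S_def .
qed



lemma orth_inner:
  fixes Q :: "real^'n^'n"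
  assumes "orthogonal_matrix Q"
  shows "(Q *v x) \<bullet> (Q *v y) = x \<bullet> y"
proof -
  have "orthogonal_transformation (\<lambda>x. Q *v x)"
    using assms orthogonal_transformation_matrix[of "\<lambda>x. Q *v x"] by simp
  then show ?thesis unfolding orthogonal_transformation_def by blast
qed

lemma hyp_rot_props:
  fixes w :: "real^'n"
  assumes "w \<noteq> 0"
  shows "orthogonal_matrix (hyp_rot w) \<and> hyp_rot w *v axis hyp_index 1 = w /\<^sub>R norm w"
proof -
  have "norm (w /\<^sub>R norm w) = 1" using assms by simp
  then obtain A where "orthogonal_matrix A" "A *v axis hyp_index 1 = w /\<^sub>R norm w"
    using orthogonal_matrix_exists_basis by blast
  then have "\<exists>Q. orthogonal_matrix Q \<and> Q *v axis hyp_index 1 = w /\<^sub>R norm w" by blast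
  then show ?thesis unfolding hyp_rot_def by (rule someI_ex)
qed

definition emb :: "('n::finite \<Rightarrow> real) \<Rightarrow> real^'n" where
  "emb y = (\<chi> j. if j = hyp_index then 0 else y j)"

lemma emb_axis: "emb y \<bullet> axis hyp_index 1 = 0"
  by (simp add: emb_def inner_axis)

lemma emb_norm2: "(norm (emb y))\<^sup>2 = (\<Sum>j\<in>UNIV - {hyp_index}. (y j)\<^sup>2)"
proof -
  have "(norm (emb y))\<^sup>2 = (\<Sum>j\<in>UNIV. (emb y $ j)\<^sup>2)"
    by (simp only: power2_norm_eq_inner inner_vec_def) (simp add: power2_eq_square)
  also have "\<dots> = (\<Sum>j\<in>UNIV. if j = hyp_index then 0 else (y j)\<^sup>2)"
    by (intro sum.cong) (auto simp: emb_def)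
  also have "\<dots> = (\<Sum>j\<in>UNIV - {hyp_index}. (y j)\<^sup>2)"
    by (simp add: sum.If_cases Diff_eq)
  finally show ?thesis .
qed

lemma emb_measurable:
  "emb \<in> borel_measurable (Pi\<^sub>M (UNIV - {hyp_index}) (\<lambda>_. lborel))"
proof -
  have e: "emb = (\<lambda>y. \<Sum>j\<in>UNIV. (if j = hyp_index then 0 else y j) *\<^sub>R axis j 1)"
  proof
    fix y
    show "emb y = (\<Sum>j\<in>UNIV. (if j = hyp_index then 0 else y j) *\<^sub>R axis j 1)"
      using basis_expansion[of "emb y"] by (simp add: emb_def scalar_mult_eq_scaleR)
  qed
  have m: "(\<lambda>y. if j = hyp_index then 0 else y j) \<in> borel_measurable (Pi\<^sub>M (UNIV - {hyp_index}) (\<lambda>_. lborel))" for j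
    by (cases "j = hyp_index") (auto intro!: measurable_PiM_single')
  show ?thesis unfolding e by (intro borel_measurable_sum borel_measurable_scaleR m) auto
qed

lemma map_measurable:
  fixes v :: "real^'n" and Q :: "real^'n^'n"
  shows "(\<lambda>y. v + Q *v emb y) \<in> measurable (Pi\<^sub>M (UNIV - {hyp_index}) (\<lambda>_. lborel)) borel"
proof -
  have c: "(\<lambda>x. v + Q *v x) \<in> borel_measurable borel"
    by (intro borel_measurable_continuous_onI continuous_intros)
  show ?thesis using measurable_compose[OF emb_measurable c] by (simp add: o_def)
qed

lemma geom:
  fixes v v' w :: "real^'n"
  assumes h: "(w - v) \<bullet> (v - v') = 0" and v': "norm v' \<le> c * norm v" and c: "0 \<le> c"
  shows "(norm w)\<^sup>2 \<ge> (1 - c) * ((norm v)\<^sup>2 + (norm (w - v))\<^sup>2)"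
proof -
  define z where "z = w - v"
  have w: "w = v + z" by (simp add: z_def)
  have n: "(norm w)\<^sup>2 = (norm v)\<^sup>2 + 2 * (v \<bullet> z) + (norm z)\<^sup>2"
    unfolding w by (simp add: power2_norm_eq_inner inner_add inner_commute)
  have "z \<bullet> (v - v') = 0" using h by (simp add: z_def)
  then have vz: "v \<bullet> z = v' \<bullet> z" by (simp add: inner_diff inner_commute)
  have "\<bar>v' \<bullet> z\<bar> \<le> norm v' * norm z" by (rule Cauchy_Schwarz_ineq2)
  also have "\<dots> \<le> c * norm v * norm z" using v' by (intro mult_right_mono) auto
  finally have b1: "\<bar>v \<bullet> z\<bar> \<le> c * (norm v * norm z)" using vz by (simp add: mult.assoc)
  have b2: "2 * (norm v * norm z) \<le> (norm v)\<^sup>2 + (norm z)\<^sup>2"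
    using sum_squares_bound[of "norm v" "norm z"] by (simp add: algebra_simps power2_eq_square)
  have "c * (2 * (norm v * norm z)) \<le> c * ((norm v)\<^sup>2 + (norm z)\<^sup>2)"
    using b2 c by (intro mult_left_mono) auto
  then have b3: "2 * (c * (norm v * norm z)) \<le> c * ((norm v)\<^sup>2 + (norm z)\<^sup>2)" by simp
  have b4: "v \<bullet> z \<ge> - (c * (norm v * norm z))" using b1 by linarith
  have e: "(1 - c) * ((norm v)\<^sup>2 + (norm z)\<^sup>2) = (norm v)\<^sup>2 + (norm z)\<^sup>2 - c * ((norm v)\<^sup>2 + (norm z)\<^sup>2)"
    by (simp add: left_diff_distrib)
  show ?thesis unfolding z_def[symmetric] n e using b3 b4 by linarith
qed

lemma c3_props: "q > 0 \<Longrightarrow> 0 < c3 q \<and> c3 q \<le> 1/2"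
  by (simp add: c3_def field_simps)

lemma const_bound:
  assumes q: "q > 0"
  shows "(1 - c3 q) powr (-q/2) \<le> 2"
proof -
  define c where "c = c3 q"
  have c: "0 < c" "c \<le> 1/2" using c3_props[OF q] by (auto simp: c_def)
  have "ln (1 - c) \<ge> - c - 2 * c\<^sup>2" using c by (intro ln_one_minus_pos_lower_bound) auto
  moreover have "2 * c\<^sup>2 \<le> c" using c by (simp add: power2_eq_square)
  ultimately have l: "ln (1 - c) \<ge> - 2 * c" by simp
  have qc: "q * c \<le> 1/2" using q by (simp add: c_def c3_def field_simps)
  have "(1 - c) powr (-q/2) = exp (-q/2 * ln (1 - c))" using c by (simp add: powr_def)
  also have "\<dots> \<le> exp (1/2)"
  proof -
    have "-q/2 * ln (1 - c) \<le> -q/2 * (- 2 * c)" using l q by (intro mult_left_mono_neg) auto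
    also have "\<dots> = q * c" by simp
    finally show ?thesis using qc by simp
  qed
  also have "exp (1/2::real) \<le> 2"
  proof -
    have "exp (1/2::real) * exp (1/2) = exp 1" by (simp add: exp_add[symmetric])
    also have "\<dots> \<le> 3" by (rule exp_le)
    finally have "exp (1/2::real) * exp (1/2) \<le> 3" .
    show ?thesis
    proof (rule ccontr)
      assume "\<not> exp (1/2::real) \<le> 2"
      then have "2 * 2 < exp (1/2::real) * exp (1/2)" by (intro mult_strict_mono) auto
      then show False using \<open>exp (1/2::real) * exp (1/2) \<le> 3\<close> by linarith
    qed
  qed
  finally show ?thesis by (simp add: c_def)
qed

lemma cos_angle_bounds: "-1 \<le> cos_angle a b \<and> cos_angle a b \<le> 1"
proof -
  have "\<bar>a \<bullet> b\<bar> \<le> norm a * norm b" by (rule Cauchy_Schwarz_ineq2)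
  then have "\<bar>cos_angle a b\<bar> \<le> 1"
    unfolding cos_angle_def by (cases "norm a * norm b = 0") (auto simp: abs_divide divide_le_eq_1)
  then show ?thesis by (simp add: abs_le_iff)
qed

lemma pw_bound:
  fixes v v' w X Y :: "real^'n"
  assumes h: "(w - v) \<bullet> (v - v') = 0" and v: "norm v \<ge> 2" and v': "norm v' < c3 q * norm v"
    and q: "q > 0" and N: "N > 0" and f0: "\<forall>x. 0 \<le> f x" and fg: "\<forall>x. f x \<le> gweight N q x"
    and a: "a > 0" and bt: "\<forall>x\<in>{-1..1}. 0 \<le> bt x \<and> bt x \<le> b1"
  shows "indicator {x. norm x \<ge> c1 q * norm v} w * f w * norm (v - w) powr a * bt (cos_angle X Y)
     \<le> b1 * N * 2 * ((norm v)\<^sup>2 + (norm (w - v))\<^sup>2) powr (-q/2) * ((norm (w - v))\<^sup>2) powr (a/2)"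
proof -
  define c where "c = c3 q"
  have c: "0 < c" "c \<le> 1/2" using c3_props[OF q] by (auto simp: c_def)
  define A where "A = (norm v)\<^sup>2 + (norm (w - v))\<^sup>2"
  have "(2::real)\<^sup>2 \<le> (norm v)\<^sup>2" using v by (intro power_mono) auto
  then have "4 \<le> (norm v)\<^sup>2" by simp
  then have A4: "A \<ge> 4" unfolding A_def
    using zero_le_power2[of "norm (w - v)"] by linarith
  have g: "(norm w)\<^sup>2 \<ge> (1 - c) * A"
    unfolding A_def using geom[OF h, of c] v' c by (simp add: c_def)
  have "(1/2) * 4 \<le> (1 - c) * A" using c A4 by (intro mult_mono) auto
  then have "(1 - c) * A \<ge> 2" by simp
  then have w2: "(norm w)\<^sup>2 > 1" using g by linarith
  then have w1: "norm w > 1"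
    using power_le_one[of "norm w" 2] by (cases "norm w \<le> 1") auto
  have fw: "f w \<le> N * norm w powr (-q)" using fg[rule_format, of w] w1 by (simp add: gweight_def not_le)
  have "norm w powr (-q) = ((norm w)\<^sup>2) powr (-q/2)"
    using sq_powr_eq[of "norm w" "-q"] w1 by (cases "w = 0") auto
  also have "\<dots> \<le> ((1 - c) * A) powr (-q/2)"
    using g c A4 q by (intro powr_mono2') auto
  also have "\<dots> = (1 - c) powr (-q/2) * A powr (-q/2)"
    using c A4 by (intro powr_mult)
  also have "\<dots> \<le> 2 * A powr (-q/2)"
    using const_bound[OF q] by (intro mult_right_mono) (auto simp: c_def)
  finally have wq: "norm w powr (-q) \<le> 2 * A powr (-q/2)" .
  have fw2: "f w \<le> N * (2 * A powr (-q/2))"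
    using fw mult_left_mono[OF wq, of N] N by linarith
  have P: "norm (v - w) powr a = ((norm (w - v))\<^sup>2) powr (a/2)"
  proof (cases "w = v")
    case True then show ?thesis using a by simp
  next
    case False
    then have "norm (w - v) > 0" by simp
    from sq_powr_eq[OF this, of a] show ?thesis by (simp add: norm_minus_commute)
  qed
  have ind: "(0::real) \<le> indicator {x. norm x \<ge> c1 q * norm v} w" "indicator {x. norm x \<ge> c1 q * norm v} w \<le> (1::real)"
    by (auto simp: indicator_def)
  have btb: "0 \<le> bt (cos_angle X Y)" "bt (cos_angle X Y) \<le> b1"
    using bt cos_angle_bounds[of X Y] by auto
  have "indicator {x. norm x \<ge> c1 q * norm v} w * f w * norm (v - w) powr a * bt (cos_angle X Y)
     \<le> 1 * (N * (2 * A powr (-q/2))) * norm (v - w) powr a * b1"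
    using ind btb fw2 f0 N by (intro mult_mono) auto
  also have "\<dots> = b1 * N * 2 * A powr (-q/2) * ((norm (w - v))\<^sup>2) powr (a/2)"
    unfolding P by simp
  finally show ?thesis unfolding A_def .
qed

lemma card_I: "CARD('n::finite) \<ge> 2 \<Longrightarrow> card (UNIV - {hyp_index::'n}) = CARD('n) - 1 \<and> UNIV - {hyp_index::'n} \<noteq> {}"
proof -
  assume c: "CARD('n) \<ge> 2"
  have "card (UNIV - {hyp_index::'n}) = CARD('n) - 1" by (simp add: card_Diff_singleton)
  moreover have "UNIV - {hyp_index::'n} \<noteq> {}"
  proof
    assume "UNIV - {hyp_index::'n} = {}"
    then have "card (UNIV - {hyp_index::'n}) = 0" by (simp only: card.empty)
    then show False using c \<open>card (UNIV - {hyp_index::'n}) = CARD('n) - 1\<close> by simp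
  qed
  ultimately show ?thesis by simp
qed

lemma inner_bound:
  fixes v v' :: "real^'n"
  assumes card: "CARD('n) \<ge> 2" and v: "norm v \<ge> 2" and v': "norm v' < c3 q * norm v"
    and q: "q > real (CARD('n) - 1) + a" and a: "a \<ge> 1"
    and N: "N > 0" and f0: "\<forall>x. 0 \<le> f x" and fg: "\<forall>x. f x \<le> gweight N q x"
    and bt: "\<forall>x\<in>{-1..1}. 0 \<le> bt x \<and> bt x \<le> b1"
  shows "(\<integral>vs'. indicator {x. norm x \<ge> c1 q * norm v} vs' * f vs' * norm (v - vs') powr a *
              bt (cos_angle (v - (v' + vs' - v)) (v' - vs')) \<partial>hyperplane_measure v (v - v'))
     \<le> b1 * N * 2 * (real (CARD('n) - 1) powr (a/2) * real (CARD('n) - 1) * (8 * 4^(CARD('n) - 1) / (q - real (CARD('n) - 1) - a)))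
        * norm v powr (real (CARD('n) - 1) + a - q)"
proof -
  define m where "m = CARD('n) - 1"
  define I where "I = UNIV - {hyp_index::'n}"
  have cI: "card I = m" "I \<noteq> {}" "finite I" using card_I[OF card] by (auto simp: I_def m_def)
  have q0: "q > 0" using q a of_nat_0_le_iff[of "CARD('n) - 1"] by linarith
  define Cm where "Cm = real m powr (a/2) * real m * (8 * 4^m / (q - real m - a))"
  have Cm0: "Cm \<ge> 0" using q by (simp add: Cm_def m_def)
  have b10: "b1 \<ge> 0" using bt by force
  define Kmax where "Kmax = b1 * N * 2 * Cm * norm v powr (real m + a - q)"
  have K0: "Kmax \<ge> 0" using b10 N Cm0 by (simp add: Kmax_def)
  define d where "d = v - v'"
  have c3: "0 < c3 q" "c3 q \<le> 1/2" using c3_props[OF q0] by auto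
  have "c3 q * norm v \<le> 1/2 * norm v" using c3 by (intro mult_right_mono) auto
  then have "norm v' < norm v" using v' v by linarith
  then have d0: "d \<noteq> 0" by (auto simp: d_def)
  define Q where "Q = hyp_rot d"
  have Q: "orthogonal_matrix Q" "Q *v axis hyp_index 1 = d /\<^sub>R norm d"
    using hyp_rot_props[OF d0] by (auto simp: Q_def)
  define \<phi> where "\<phi> y = v + Q *v emb y" for y
  have \<mu>: "hyperplane_measure v (v - v') = distr (Pi\<^sub>M I (\<lambda>_. lborel)) borel \<phi>"
    unfolding hyperplane_measure_def \<phi>_def emb_def Q_def d_def I_def by simp
  have \<phi>m: "\<phi> \<in> measurable (Pi\<^sub>M I (\<lambda>_. lborel)) borel"
    unfolding \<phi>_def I_def by (rule map_measurable)
  define H where "H vs' = indicator {x. norm x \<ge> c1 q * norm v} vs' * f vs' * norm (v - vs') powr a *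
              bt (cos_angle (v - (v' + vs' - v)) (v' - vs'))" for vs'
  have H0: "H w \<ge> 0" for w
    using f0 bt cos_angle_bounds[of "v - (v' + w - v)" "v' - w"] by (auto simp: H_def indicator_def)
  define G where "G w = (if (w - v) \<bullet> d = 0 then ennreal (b1 * N * 2 * ((norm v)\<^sup>2 + (norm (w - v))\<^sup>2) powr (-q/2) * ((norm (w - v))\<^sup>2) powr (a/2)) else \<infinity>)" for w
  have Gm: "G \<in> borel_measurable borel" unfolding G_def by measurable
  have HG: "ennreal (H w) \<le> G w" for w
  proof (cases "(w - v) \<bullet> d = 0")
    case True
    then have "H w \<le> b1 * N * 2 * ((norm v)\<^sup>2 + (norm (w - v))\<^sup>2) powr (-q/2) * ((norm (w - v))\<^sup>2) powr (a/2)"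
      unfolding H_def using a by (intro pw_bound[OF _ v v' q0 N f0 fg _ bt]) (auto simp: d_def)
    then show ?thesis using True by (simp add: G_def ennreal_leI)
  qed (simp add: G_def)
  have S: "(norm (\<phi> y - v))\<^sup>2 = (\<Sum>j\<in>I. (y j)\<^sup>2)" for y
  proof -
    have "(norm (\<phi> y - v))\<^sup>2 = (Q *v emb y) \<bullet> (Q *v emb y)" by (simp add: \<phi>_def power2_norm_eq_inner)
    also have "\<dots> = (norm (emb y))\<^sup>2" by (simp add: orth_inner[OF Q(1)] power2_norm_eq_inner)
    finally show ?thesis by (simp add: emb_norm2 I_def)
  qed
  have hyp: "(\<phi> y - v) \<bullet> d = 0" for y
  proof -
    have "d = norm d *\<^sub>R (Q *v axis hyp_index 1)" using Q(2) d0 by simp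
    then have "(\<phi> y - v) \<bullet> d = norm d * ((Q *v emb y) \<bullet> (Q *v axis hyp_index 1))"
      by (metis \<phi>_def add_diff_cancel_left' inner_scaleR_right)
    also have "\<dots> = 0" by (simp add: orth_inner[OF Q(1)] emb_axis)
    finally show ?thesis .
  qed
  have "(\<integral>\<^sup>+w. G w \<partial>hyperplane_measure v (v - v')) = (\<integral>\<^sup>+y. G (\<phi> y) \<partial>Pi\<^sub>M I (\<lambda>_. lborel))"
  proof -
    have Gm': "G \<in> borel_measurable (distr (Pi\<^sub>M I (\<lambda>_. lborel)) borel \<phi>)"
      using Gm by (simp add: measurable_cong_sets[OF sets_distr refl])
    show ?thesis unfolding \<mu> by (rule nn_integral_distr[OF \<phi>m Gm'])
  qed
  also have "\<dots> = (\<integral>\<^sup>+y. ennreal (b1 * N * 2) * ennreal (((norm v)\<^sup>2 + (\<Sum>j\<in>I. (y j)\<^sup>2)) powr (-q/2) * (\<Sum>j\<in>I. (y j)\<^sup>2) powr (a/2)) \<partial>Pi\<^sub>M I (\<lambda>_. lborel))"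
  proof (intro nn_integral_cong)
    fix y
    show "G (\<phi> y) = ennreal (b1 * N * 2) * ennreal (((norm v)\<^sup>2 + (\<Sum>j\<in>I. (y j)\<^sup>2)) powr (-q/2) * (\<Sum>j\<in>I. (y j)\<^sup>2) powr (a/2))"
      unfolding G_def using hyp[of y] S[of y] b10 N by (simp add: ennreal_mult[symmetric] mult.assoc)
  qed
  also have "\<dots> = ennreal (b1 * N * 2) * (\<integral>\<^sup>+y. ennreal (((norm v)\<^sup>2 + (\<Sum>j\<in>I. (y j)\<^sup>2)) powr (-q/2) * (\<Sum>j\<in>I. (y j)\<^sup>2) powr (a/2)) \<partial>Pi\<^sub>M I (\<lambda>_. lborel))"
    using cI by (intro nn_integral_cmult) (auto intro!: measurable_PiM_single')
  also have "\<dots> \<le> ennreal (b1 * N * 2) * ennreal (real (card I) powr (a/2) * real (card I) * (8 * 4^card I / (q - card I - a)) * ((norm v)\<^sup>2) powr ((real (card I) + a - q)/2))"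
    using v cI q a by (intro mult_left_mono Full_bound) (auto simp: m_def)
  also have "\<dots> = ennreal Kmax"
  proof -
    have "((norm v)\<^sup>2) powr ((real m + a - q)/2) = norm v powr (real m + a - q)"
      using v by (intro sq_powr_eq) auto
    then have e: "real (card I) powr (a/2) * real (card I) * (8 * 4^card I / (q - card I - a)) * ((norm v)\<^sup>2) powr ((real (card I) + a - q)/2)
       = Cm * norm v powr (real m + a - q)" by (simp add: cI Cm_def)
    have "ennreal (b1 * N * 2) * ennreal (Cm * norm v powr (real m + a - q)) = ennreal (b1 * N * 2 * (Cm * norm v powr (real m + a - q)))"
      using b10 N Cm0 by (intro ennreal_mult[symmetric]) auto
    then show ?thesis unfolding e Kmax_def by (simp add: mult.assoc)
  qed
  finally have GK: "(\<integral>\<^sup>+w. G w \<partial>hyperplane_measure v (v - v')) \<le> ennreal Kmax" .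
  have "(\<integral>w. H w \<partial>hyperplane_measure v (v - v')) \<le> Kmax"
  proof (cases "integrable (hyperplane_measure v (v - v')) H")
    case True
    have "ennreal (\<integral>w. H w \<partial>hyperplane_measure v (v - v')) = (\<integral>\<^sup>+w. ennreal (H w) \<partial>hyperplane_measure v (v - v'))"
      using True H0 by (intro nn_integral_eq_integral[symmetric]) auto
    also have "\<dots> \<le> (\<integral>\<^sup>+w. G w \<partial>hyperplane_measure v (v - v'))"
      by (intro nn_integral_mono HG)
    finally have "ennreal (\<integral>w. H w \<partial>hyperplane_measure v (v - v')) \<le> ennreal Kmax" using GK by simp
    then show ?thesis using K0 by (simp add: ennreal_le_iff)
  next
    case False
    then show ?thesis using K0 by (simp add: not_integrable_integral_eq)
  qed
  then show ?thesis unfolding H_def Kmax_def Cm_def m_def .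
qed



lemma main_bound:
  fixes f :: "real^'n \<Rightarrow> real" and v :: "real^'n" and bt :: "real \<Rightarrow> real"
  assumes card: "CARD('n) \<ge> 2" and s: "0 < s" and g2: "0 \<le> \<gamma> + 2 * s" and b0: "0 < b0"
    and bt: "\<forall>x\<in>{-1..1}. b0 \<le> bt x \<and> bt x \<le> b1"
    and f0: "\<forall>v. 0 \<le> f v" and fint: "integrable lborel f" and M: "(\<integral>v. f v \<partial>lborel) \<le> M0"
    and q: "q > real CARD('n) + \<gamma> + 2 * s" and N: "N > 0" and fg: "\<forall>v. f v \<le> gweight N q v"
    and v: "norm v \<ge> 2"
  shows "B2q q \<gamma> s bt f f v \<le>
     (M0 * 2 powr (real CARD('n) + 2 * s) * b1 * 2 * (real (CARD('n) - 1) powr ((\<gamma> + 2 * s + 1)/2) * real (CARD('n) - 1) * 8 * 4^(CARD('n) - 1)))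
       * norm v powr \<gamma> / (q - (real CARD('n) + \<gamma> + 2 * s)) * gweight N q v"
proof -
  define m where "m = CARD('n) - 1"
  define a where "a = \<gamma> + 2 * s + 1"
  define p where "p = real CARD('n) + 2 * s"
  define \<epsilon> where "\<epsilon> = q - (real CARD('n) + \<gamma> + 2 * s)"
  have mr: "real m = real CARD('n) - 1" using card by (simp add: m_def of_nat_diff)
  have e0: "\<epsilon> > 0" using q by (simp add: \<epsilon>_def)
  have eps: "q - real m - a = \<epsilon>" by (simp add: mr a_def \<epsilon>_def)
  have a1: "a \<ge> 1" using g2 by (simp add: a_def)
  have qa: "q > real m + a" using eps e0 by simp
  have bt': "\<forall>x\<in>{-1..1}. 0 \<le> bt x \<and> bt x \<le> b1"
  proof
    fix x :: real assume "x \<in> {-1..1}"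
    then have "b0 \<le> bt x" "bt x \<le> b1" using bt by auto
    then show "0 \<le> bt x \<and> bt x \<le> b1" using b0 by linarith
  qed
  have "b0 \<le> bt 0 \<and> bt 0 \<le> b1" using bt by auto
  then have b1: "b1 > 0" using b0 by linarith
  have "0 \<le> (\<integral>v. f v \<partial>lborel)" using f0 by (intro integral_nonneg_AE AE_I2) auto
  then have M0: "M0 \<ge> 0" using M by linarith
  define Cm where "Cm = real m powr (a/2) * real m * (8 * 4^m / (q - real m - a))"
  have Cm0: "Cm \<ge> 0" using qa by (simp add: Cm_def)
  define Kmax where "Kmax = b1 * N * 2 * Cm * norm v powr (real m + a - q)"
  have K0: "Kmax \<ge> 0" using b1 N Cm0 by (simp add: Kmax_def)
  define X where "X = (norm v / 2) powr (-p) * Kmax"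
  have X0: "X \<ge> 0" using K0 by (simp add: X_def)
  define K where "K v' = (\<integral>vs'. indicator {x. norm x \<ge> c1 q * norm v} vs' * f vs' * norm (v - vs') powr (\<gamma> + 2 * s + 1) *
              bt (cos_angle (v - (v' + vs' - v)) (v' - vs')) \<partial>hyperplane_measure v (v - v'))" for v'
  define F where "F v' = indicator {v'. norm v' < c3 q * norm v} v' *
        ((f v' - f v) / norm (v' - v) powr p * K v')" for v'
  have B: "B2q q \<gamma> s bt f f v = (\<integral>v'. F v' \<partial>lborel)"
    unfolding B2q_def F_def K_def p_def ..
  have q0: "q > 0" using qa a1 by simp
  have c3: "0 < c3 q" "c3 q \<le> 1/2" using c3_props[OF q0] by auto
  have FX: "F v' \<le> f v' * X" for v'
  proof (cases "norm v' < c3 q * norm v")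
    case False
    then show ?thesis using f0 X0 by (simp add: F_def)
  next
    case True
    have Kb: "K v' \<le> Kmax"
      unfolding K_def Kmax_def Cm_def m_def a_def
      using inner_bound[OF card v True _ _ N f0 fg bt', of "\<gamma> + 2 * s + 1"] qa a1
      by (simp add: m_def a_def)
    have Kp: "K v' \<ge> 0"
    proof -
      have btn: "0 \<le> bt (cos_angle A B)" for A B :: "real^'n"
        using bt' cos_angle_bounds[of A B] by auto
      show ?thesis unfolding K_def using f0 btn
        by (intro integral_nonneg_AE AE_I2 mult_nonneg_nonneg) (auto simp: indicator_def)
    qed
    have "c3 q * norm v \<le> 1/2 * norm v" using c3 by (intro mult_right_mono) auto
    then have vv: "norm (v' - v) \<ge> norm v / 2"
      using True norm_triangle_ineq2[of v v'] by (simp add: norm_minus_commute)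
    have p0: "p \<ge> 0" using s by (simp add: p_def)
    have vpos: "norm v / 2 > 0" using v by linarith
    have dd: "1 / norm (v' - v) powr p \<le> (norm v / 2) powr (-p)"
    proof -
      have "(norm v / 2) powr p \<le> norm (v' - v) powr p" using vv p0 vpos by (intro powr_mono2) auto
      moreover have "(norm v / 2) powr p > 0" using vpos by simp
      moreover have "norm (v' - v) > 0" using vv vpos by linarith
      then have "norm (v' - v) powr p > 0" by simp
      ultimately have "1 / norm (v' - v) powr p \<le> 1 / (norm v / 2) powr p"
        by (intro divide_left_mono) auto
      then show ?thesis by (simp add: powr_minus_divide)
    qed
    have "F v' = (f v' - f v) / norm (v' - v) powr p * K v'" using True by (simp add: F_def)
    also have "\<dots> \<le> f v' / norm (v' - v) powr p * K v'"
    proof (rule mult_right_mono)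
      show "(f v' - f v) / norm (v' - v) powr p \<le> f v' / norm (v' - v) powr p"
        using f0 by (intro divide_right_mono) auto
    qed (use Kp in auto)
    also have "\<dots> = f v' * (1 / norm (v' - v) powr p) * K v'" by simp
    also have "\<dots> \<le> f v' * (norm v / 2) powr (-p) * Kmax"
    proof (rule mult_mono)
      show "f v' * (1 / norm (v' - v) powr p) \<le> f v' * (norm v / 2) powr (-p)"
        using f0 dd by (intro mult_left_mono) auto
      show "0 \<le> f v' * (norm v / 2) powr (-p)" using f0 by simp
    qed (use Kb Kp in auto)
    finally show ?thesis by (simp add: X_def mult.assoc)
  qed
  have "(\<integral>v'. F v' \<partial>lborel) \<le> M0 * X"
  proof (cases "integrable lborel F")
    case True
    have "(\<integral>v'. F v' \<partial>lborel) \<le> (\<integral>v'. f v' * X \<partial>lborel)"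
      using True fint FX by (intro integral_mono) auto
    also have "\<dots> = (\<integral>v'. f v' \<partial>lborel) * X" by simp
    also have "\<dots> \<le> M0 * X" using M X0 by (intro mult_right_mono) auto
    finally show ?thesis .
  next
    case False
    then show ?thesis using M0 X0 by (simp add: not_integrable_integral_eq)
  qed
  also have "M0 * X = (M0 * 2 powr (real CARD('n) + 2 * s) * b1 * 2 * (real (CARD('n) - 1) powr ((\<gamma> + 2 * s + 1)/2) * real (CARD('n) - 1) * 8 * 4^(CARD('n) - 1)))
       * norm v powr \<gamma> / (q - (real CARD('n) + \<gamma> + 2 * s)) * gweight N q v"
  proof -
    have nv: "norm v > 1" using v by linarith
    have g: "gweight N q v = N * norm v powr (-q)" using nv by (simp add: gweight_def)
    have h1: "(norm v / 2) powr (-p) = 2 powr p * norm v powr (-p)"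
    proof -
      have "(norm v / 2) powr (-p) = norm v powr (-p) / 2 powr (-p)" by (rule powr_divide)
      also have "2 powr (-p) = 1 / 2 powr p" by (simp add: powr_minus_divide)
      finally show ?thesis by simp
    qed
    have h2: "norm v powr (-p) * norm v powr (real m + a - q) = norm v powr \<gamma> * norm v powr (-q)"
    proof -
      have "-p + (real m + a - q) = \<gamma> + (-q)" by (simp add: p_def mr a_def)
      then show ?thesis by (simp only: powr_add[symmetric])
    qed
    have gen: "M0 * ((P * A) * (b1 * N * 2 * (R * rm * (8 * F / \<epsilon>)) * B')) = (M0 * P * b1 * 2 * (R * rm * 8 * F)) * G / \<epsilon> * (N * H)"
      if "A * B' = G * H" for P A R rm F B' G H :: real
    proof -
      have "M0 * ((P * A) * (b1 * N * 2 * (R * rm * (8 * F / \<epsilon>)) * B')) = (M0 * P * b1 * 2 * (R * rm * 8 * F)) / \<epsilon> * N * (A * B')"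
        by (simp add: field_simps)
      also have "\<dots> = (M0 * P * b1 * 2 * (R * rm * 8 * F)) / \<epsilon> * N * (G * H)" using that by simp
      also have "\<dots> = (M0 * P * b1 * 2 * (R * rm * 8 * F)) * G / \<epsilon> * (N * H)" by (simp add: field_simps)
      finally show ?thesis .
    qed
    have "M0 * X = M0 * ((2 powr p * norm v powr (-p)) * (b1 * N * 2 * (real m powr (a/2) * real m * (8 * 4^m / \<epsilon>)) * norm v powr (real m + a - q)))"
      by (simp only: X_def Kmax_def Cm_def eps h1)
    also have "\<dots> = (M0 * 2 powr p * b1 * 2 * (real m powr (a/2) * real m * 8 * 4^m)) * norm v powr \<gamma> / \<epsilon> * (N * norm v powr (-q))"
      by (rule gen[OF h2])
    finally show ?thesis unfolding g m_def a_def p_def \<epsilon>_def .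
  qed
  finally show ?thesis unfolding B .
qed


theorem proposition3p8:
  fixes \<gamma> s b0 b1 m0 M0 E0 H0 :: real
  assumes "CARD('n::finite) \<ge> 2"
    and "0 < s" and "s < 1"
    and "0 \<le> \<gamma> + 2 * s" and "\<gamma> + 2 * s \<le> 2"
    and "0 < b0" and "b0 \<le> b1"
    and "0 < m0" and "m0 \<le> M0"
  shows "\<exists>C>0. \<forall>(bt::real \<Rightarrow> real) (f::real^'n \<Rightarrow> real) (q::real) (N::real).
    smooth_real bt \<and> (\<forall>x\<in>{-1..1}. b0 \<le> bt x \<and> bt x \<le> b1) \<and>
    f \<in> borel_measurable lborel \<and> (\<forall>v. 0 \<le> f v) \<and>
    integrable lborel f \<and> m0 \<le> (\<integral>v. f v \<partial>lborel) \<and> (\<integral>v. f v \<partial>lborel) \<le> M0 \<and>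
    integrable lborel (\<lambda>v. f v * (norm v)\<^sup>2) \<and> (\<integral>v. f v * (norm v)\<^sup>2 \<partial>lborel) \<le> E0 \<and>
    integrable lborel (\<lambda>v. f v * ln (f v)) \<and> (\<integral>v. f v * ln (f v) \<partial>lborel) \<le> H0 \<and>
    q > real CARD('n) + \<gamma> + 2 * s \<and> N > 0 \<and> (\<forall>v. f v \<le> gweight N q v)
    \<longrightarrow> (\<forall>v::real^'n. norm v \<ge> 2 \<longrightarrow>
          B2q q \<gamma> s bt f f v
            \<le> C * norm v powr \<gamma> / (q - (real CARD('n) + \<gamma> + 2 * s)) * gweight N q v)"
proof -
  define C where "C = M0 * 2 powr (real CARD('n) + 2 * s) * b1 * 2 * (real (CARD('n) - 1) powr ((\<gamma> + 2 * s + 1)/2) * real (CARD('n) - 1) * 8 * 4^(CARD('n) - 1))"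
  have Cpos: "C > 0"
  proof -
    have "real (CARD('n) - 1) > 0" using assms(1) by simp
    moreover have "M0 > 0" "b1 > 0" using assms by linarith+
    ultimately show ?thesis unfolding C_def by simp
  qed
  show ?thesis
  proof (intro exI[of _ C] conjI allI impI)
    show "C > 0" by (rule Cpos)
  next
    fix bt :: "real \<Rightarrow> real" and f :: "real^'n \<Rightarrow> real" and q N :: real and v :: "real^'n"
    assume H: "smooth_real bt \<and> (\<forall>x\<in>{-1..1}. b0 \<le> bt x \<and> bt x \<le> b1) \<and>
      f \<in> borel_measurable lborel \<and> (\<forall>v. 0 \<le> f v) \<and>
      integrable lborel f \<and> m0 \<le> (\<integral>v. f v \<partial>lborel) \<and> (\<integral>v. f v \<partial>lborel) \<le> M0 \<and>
      integrable lborel (\<lambda>v. f v * (norm v)\<^sup>2) \<and> (\<integral>v. f v * (norm v)\<^sup>2 \<partial>lborel) \<le> E0 \<and>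
      integrable lborel (\<lambda>v. f v * ln (f v)) \<and> (\<integral>v. f v * ln (f v) \<partial>lborel) \<le> H0 \<and>
      q > real CARD('n) + \<gamma> + 2 * s \<and> N > 0 \<and> (\<forall>v. f v \<le> gweight N q v)"
      and v: "norm v \<ge> 2"
    have bt: "\<forall>x\<in>{-1..1}. b0 \<le> bt x \<and> bt x \<le> b1" using H by blast
    have f0: "\<forall>v. 0 \<le> f v" using H by blast
    have fint: "integrable lborel f" using H by blast
    have M: "(\<integral>v. f v \<partial>lborel) \<le> M0" using H by blast
    have q: "q > real CARD('n) + \<gamma> + 2 * s" using H by blast
    have N: "N > 0" using H by blast
    have fg: "\<forall>v. f v \<le> gweight N q v" using H by blast
    show "B2q q \<gamma> s bt f f v \<le> C * norm v powr \<gamma> / (q - (real CARD('n) + \<gamma> + 2 * s)) * gweight N q v"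
      unfolding C_def by (rule main_bound[OF assms(1) assms(2) assms(4) assms(6) bt f0 fint M q N fg v])
  qed
qed

end
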